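(* Every hierarchical probabilistic automaton is leaktight.
   Context: Fix a finite alphabet $A$. A probabilistic automaton is $\mathcal{A}=(Q,q_0,\Delta,F)$ with $Q$ finite, $\Delta:Q\times A\to\mathcal{D}(Q)$. It is hierarchical if there exists a map $\mathrm{rank}:Q\to\mathbb{N}$ such that for all $a\in A$ and states $s,t$ with $\Delta(s,a)(t)>0$ we have $\mathrm{rank}(s)\le\mathrm{rank}(t)$, and moreover if $\Delta(s,a)(t)>0$, $\Delta(s,a)(t')>0$ and $\mathrm{rank}(s)=\mathrm{rank}(t)=\mathrm{rank}(t')$, then $t=t'$. For $a\in A$ let $M_a(s,t)=\Delta(s,a)(t)$, for $u=a_0\cdots a_{n-1}$ let $M_u=M_{a_0}\cdots M_{a_{n-1}}$ (identity for the empty word), and $\mathbb{P}_{\mathcal{A}}(s\xrightarrow{u}t)=M_u(s,t)$. A nonnegative $Q\times Q$ matrix $M$ is idempotent if $M(s,t)>0\iff M^2(s,t)>0$ for all $s,t$; a word $u$ is idempotent if $M_u$ is. A leak is a sequence $(u_n)$ of idempotent words such that $M_{u_n}$ converges to an idempotent matrix $M$ and there exist states $r,q$, both recurrent in the Markov chain with transition matrix $M$, with $\lim_n\mathbb{P}_{\mathcal{A}}(r\xrightarrow{u_n}q)=0$ and $\mathbb{P}_{\mathcal{A}}(r\xrightarrow{u_n}q)>0$ for all $n$. $\mathcal{A}$ is leaktight if it has no leak. *)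

theory Defs
  imports "HOL-Probability.Probability"
begin

record ('q, 'a) prob_automaton =
  pa_init  :: 'q
  pa_trans :: "'q \<Rightarrow> 'a \<Rightarrow> 'q pmf"
  pa_final :: "'q set"

type_synonym 'q qmat = "'q \<Rightarrow> 'q \<Rightarrow> real"

definition mat_mult :: "('q::finite) qmat \<Rightarrow> 'q qmat \<Rightarrow> 'q qmat" where
  "mat_mult M N = (\<lambda>s t. \<Sum>r\<in>UNIV. M s r * N r t)"

definition mat_id :: "'q qmat" where
  "mat_id = (\<lambda>s t. if s = t then 1 else 0)"

definition letter_mat :: "('q, 'a) prob_automaton \<Rightarrow> 'a \<Rightarrow> 'q qmat" where
  "letter_mat A a = (\<lambda>s t. pmf (pa_trans A s a) t)"

fun word_mat :: "('q::finite, 'a) prob_automaton \<Rightarrow> 'a list \<Rightarrow> 'q qmat" where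
  "word_mat A [] = mat_id"
| "word_mat A (a # u) = mat_mult (letter_mat A a) (word_mat A u)"

definition hierarchical :: "('q, 'a) prob_automaton \<Rightarrow> bool" where
  "hierarchical A \<longleftrightarrow> (\<exists>rank :: 'q \<Rightarrow> nat.
     (\<forall>a s t. pmf (pa_trans A s a) t > 0 \<longrightarrow> rank s \<le> rank t) \<and>
     (\<forall>a s t t'. pmf (pa_trans A s a) t > 0 \<and> pmf (pa_trans A s a) t' > 0 \<and>
        rank s = rank t \<and> rank s = rank t' \<longrightarrow> t = t'))"

definition idempotent_mat :: "('q::finite) qmat \<Rightarrow> bool" where
  "idempotent_mat M \<longleftrightarrow> (\<forall>s t. M s t > 0 \<longleftrightarrow> mat_mult M M s t > 0)"

definition recurrent :: "'q qmat \<Rightarrow> 'q \<Rightarrow> bool" where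
  "recurrent M s \<longleftrightarrow> (\<forall>t. (s, t) \<in> {(x, y). M x y > 0}\<^sup>* \<longrightarrow> (t, s) \<in> {(x, y). M x y > 0}\<^sup>*)"

definition is_leak :: "('q::finite, 'a) prob_automaton \<Rightarrow> (nat \<Rightarrow> 'a list) \<Rightarrow> bool" where
  "is_leak A u \<longleftrightarrow>
     (\<forall>n. idempotent_mat (word_mat A (u n))) \<and>
     (\<exists>M. (\<forall>s t. (\<lambda>n. word_mat A (u n) s t) \<longlonglongrightarrow> M s t) \<and> idempotent_mat M \<and>
        (\<exists>r q. recurrent M r \<and> recurrent M q \<and>
           (\<lambda>n. word_mat A (u n) r q) \<longlonglongrightarrow> 0 \<and>
           (\<forall>n. word_mat A (u n) r q > 0)))"

definition leaktight :: "('q::finite, 'a) prob_automaton \<Rightarrow> bool" where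
  "leaktight A \<longleftrightarrow> \<not> (\<exists>u. is_leak A u)"

end

theory Submission
  imports Defs
begin

lemma wm_nonneg: "word_mat A u s t \<ge> (0::real)"
  by (induction u arbitrary: s) (auto simp: mat_id_def mat_mult_def letter_mat_def intro!: sum_nonneg)

lemma pmf_sum_univ: "(\<Sum>x\<in>(UNIV::'q::finite set). pmf p x) = 1"
  by (rule sum_pmf_eq_1) auto

lemma wm_rowsum: "(\<Sum>t\<in>UNIV. word_mat (A::('q::finite,'a) prob_automaton) u s t) = 1"
proof (induction u arbitrary: s)
  case Nil
  then show ?case by (simp add: mat_id_def)
next
  case (Cons a u)
  have "(\<Sum>t\<in>UNIV. word_mat A (a # u) s t)
      = (\<Sum>t\<in>UNIV. \<Sum>r\<in>UNIV. pmf (pa_trans A s a) r * word_mat A u r t)"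
    by (simp add: mat_mult_def letter_mat_def)
  also have "\<dots> = (\<Sum>r\<in>UNIV. pmf (pa_trans A s a) r * (\<Sum>t\<in>UNIV. word_mat A u r t))"
    by (subst sum.swap) (simp add: sum_distrib_left)
  also have "\<dots> = 1" using Cons by (simp add: pmf_sum_univ)
  finally show ?case .
qed

lemma wm_le1: "word_mat (A::('q::finite,'a) prob_automaton) u s t \<le> 1"
proof -
  have "word_mat A u s t \<le> (\<Sum>t\<in>UNIV. word_mat A u s t)"
    by (rule member_le_sum) (auto simp: wm_nonneg)
  thus ?thesis by (simp add: wm_rowsum)
qed

lemma wm_rank:
  fixes A :: "('q::finite,'a) prob_automaton" and rank :: "'q \<Rightarrow> nat"
  assumes mono: "\<And>a s t. pmf (pa_trans A s a) t > 0 \<Longrightarrow> rank s \<le> rank t"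
  shows "word_mat A u s t > 0 \<Longrightarrow> rank s \<le> rank t"
proof (induction u arbitrary: s)
  case Nil
  then show ?case by (simp add: mat_id_def split: if_splits)
next
  case (Cons a u)
  from Cons.prems have "0 < (\<Sum>r\<in>UNIV. pmf (pa_trans A s a) r * word_mat A u r t)"
    by (simp add: mat_mult_def letter_mat_def)
  then obtain r where "pmf (pa_trans A s a) r * word_mat A u r t > 0"
    using sum_nonpos[of UNIV "\<lambda>r. pmf (pa_trans A s a) r * word_mat A u r t"] by (meson UNIV_I not_less)
  then have "pmf (pa_trans A s a) r > 0" "word_mat A u r t > 0"
    by (auto simp: zero_less_mult_iff wm_nonneg pmf_nonneg dest: order.strict_trans2)
  then show ?case using mono Cons.IH by (meson le_trans)
qed

lemma sum_single_nz:
  fixes f :: "'q::finite \<Rightarrow> real"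
  assumes "\<And>x. x \<noteq> x0 \<Longrightarrow> f x = 0"
  shows "sum f UNIV = f x0"
proof -
  have "sum f UNIV = f x0 + sum f (UNIV - {x0})" by (simp add: sum.remove)
  also have "sum f (UNIV - {x0}) = 0" using assms by (intro sum.neutral) auto
  finally show ?thesis by simp
qed

definition cst :: "('q::finite,'a::finite) prob_automaton \<Rightarrow> real" where
  "cst A = Max (insert 0 {pmf (pa_trans A s a) t | s a t. pmf (pa_trans A s a) t < 1})"

lemma cst_fin: "finite {pmf (pa_trans A s a) t | s a t. pmf (pa_trans (A::('q::finite,'a::finite) prob_automaton) s a) t < 1}"
proof -
  have "{pmf (pa_trans A s a) t | s a t. pmf (pa_trans A s a) t < 1} \<subseteq> (\<lambda>(s,a,t). pmf (pa_trans A s a) t) ` UNIV"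
  proof
    fix x assume "x \<in> {pmf (pa_trans A s a) t | s a t. pmf (pa_trans A s a) t < 1}"
    then obtain s a t where "x = pmf (pa_trans A s a) t" by blast
    thus "x \<in> (\<lambda>(s,a,t). pmf (pa_trans A s a) t) ` UNIV"
      by (intro image_eqI[where x="(s,a,t)"]) auto
  qed
  thus ?thesis by (rule finite_subset) simp
qed

lemma cst_lt1: "cst A < 1"
  unfolding cst_def using cst_fin[of A] by (subst Max_less_iff) auto

lemma cst_ge0: "cst A \<ge> 0"
  unfolding cst_def using cst_fin[of A] by (intro Max_ge) auto

lemma cst_ge: "pmf (pa_trans A s a) t < 1 \<Longrightarrow> pmf (pa_trans A s a) t \<le> cst A"
  unfolding cst_def using cst_fin[of A] by (intro Max_ge) auto

lemma g_zero:
  fixes A :: "('q::finite,'a) prob_automaton" and rank :: "'q \<Rightarrow> nat"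
  assumes mono: "\<And>a s t. pmf (pa_trans A s a) t > 0 \<Longrightarrow> rank s \<le> rank t"
    and "rank x > k"
  shows "(\<Sum>t\<in>{t. rank t = k}. word_mat A u x t) = 0"
proof (rule sum.neutral, rule ballI)
  fix t assume "t \<in> {t. rank t = k}"
  then have "\<not> word_mat A u x t > 0" using wm_rank[where A=A and rank=rank and u=u and s=x and t=t, OF mono] assms(2) by auto
  thus "word_mat A u x t = 0" using wm_nonneg[of A u x t] by auto
qed

lemma wm_inv:
  fixes A :: "('q::finite,'a::finite) prob_automaton" and rank :: "'q \<Rightarrow> nat"
  assumes mono: "\<And>a s t. pmf (pa_trans A s a) t > 0 \<Longrightarrow> rank s \<le> rank t"
    and uniq: "\<And>a s t t'. pmf (pa_trans A s a) t > 0 \<Longrightarrow> pmf (pa_trans A s a) t' > 0 \<Longrightarrow>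
        rank s = rank t \<Longrightarrow> rank s = rank t' \<Longrightarrow> t = t'"
  shows "(\<exists>t. word_mat A u s t = 1) \<or> (\<Sum>t\<in>{t. rank t = rank s}. word_mat A u s t) \<le> cst A"
proof (induction u arbitrary: s)
  case Nil
  then show ?case by (auto simp: mat_id_def)
next
  case (Cons a u)
  define D where "D = pa_trans A s a"
  define g where "g x = (\<Sum>t\<in>{t. rank t = rank s}. word_mat A u x t)" for x
  have g_nn: "g x \<ge> 0" for x unfolding g_def by (intro sum_nonneg) (auto simp: wm_nonneg)
  have g_le: "g x \<le> 1" for x
  proof -
    have "g x \<le> (\<Sum>t\<in>UNIV. word_mat A u x t)" unfolding g_def
      by (intro sum_mono2) (auto simp: wm_nonneg)
    thus ?thesis by (simp add: wm_rowsum)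
  qed
  have g0: "g x = 0" if "pmf D x > 0" "rank x \<noteq> rank s" for x
  proof -
    have "rank s \<le> rank x" using mono that(1) unfolding D_def by blast
    with that(2) have "rank x > rank s" by simp
    thus ?thesis unfolding g_def by (intro g_zero[where A=A and rank=rank]) (use mono in auto)
  qed
  have W: "word_mat A (a # u) s t = (\<Sum>x\<in>UNIV. pmf D x * word_mat A u x t)" for t
    by (simp add: mat_mult_def letter_mat_def D_def)
  have sumD: "(\<Sum>t\<in>{t. rank t = rank s}. word_mat A (a # u) s t) = (\<Sum>x\<in>UNIV. pmf D x * g x)"
    unfolding W g_def by (subst sum.swap) (simp add: sum_distrib_left)
  show ?case
  proof (cases "\<exists>x0. pmf D x0 = 1")
    case True
    then obtain x0 where x0: "pmf D x0 = 1" by blast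
    have oth: "pmf D x = 0" if "x \<noteq> x0" for x
    proof -
      have "pmf D x0 + pmf D x = (\<Sum>y\<in>{x0,x}. pmf D y)" using that by simp
      also have "\<dots> \<le> (\<Sum>y\<in>UNIV. pmf D y)" by (intro sum_mono2) auto
      finally have "pmf D x0 + pmf D x \<le> (\<Sum>y\<in>UNIV. pmf D y)" .
      hence "pmf D x \<le> 0" using x0 by (simp add: pmf_sum_univ)
      thus ?thesis using pmf_nonneg[of D x] by linarith
    qed
    have Wx: "word_mat A (a # u) s t = word_mat A u x0 t" for t
      unfolding W by (subst sum_single_nz[of x0]) (auto simp: oth x0)
    from Cons.IH[of x0] show ?thesis
    proof
      assume "\<exists>t. word_mat A u x0 t = 1" then obtain t where "word_mat A u x0 t = 1" by blast
      hence "word_mat A (a # u) s t = 1" by (simp only: Wx)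
      thus ?thesis by blast
    next
      assume h: "(\<Sum>t\<in>{t. rank t = rank x0}. word_mat A u x0 t) \<le> cst A"
      show ?thesis
      proof (cases "rank x0 = rank s")
        case True
        have "(\<Sum>t\<in>{t. rank t = rank s}. word_mat A (a # u) s t) \<le> cst A"
          using h True by (simp only: Wx)
        thus ?thesis by blast
      next
        case False
        have "g x0 = 0" using g0[OF _ False] x0 by simp
        hence "(\<Sum>t\<in>{t. rank t = rank s}. word_mat A (a # u) s t) \<le> cst A"
          using cst_ge0[of A] by (simp only: Wx g_def)
        thus ?thesis by blast
      qed
    qed
  next
    case False
    have Dc: "pmf D x \<le> cst A" for x
    proof -
      have "pmf D x \<le> 1" by (rule pmf_le_1)
      moreover have "pmf D x \<noteq> 1" using False by blast
      ultimately have "pmf D x < 1" by linarith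
      thus ?thesis unfolding D_def by (rule cst_ge)
    qed
    show ?thesis
    proof (cases "\<exists>x0. pmf D x0 > 0 \<and> rank x0 = rank s")
      case True
      then obtain x0 where x0: "pmf D x0 > 0" "rank x0 = rank s" by blast
      have "(\<Sum>x\<in>UNIV. pmf D x * g x) = pmf D x0 * g x0"
      proof (rule sum_single_nz)
        fix x assume "x \<noteq> x0"
        show "pmf D x * g x = 0"
        proof (cases "pmf D x > 0")
          case True
          have "rank x \<noteq> rank s"
          proof
            assume "rank x = rank s"
            hence "x = x0" using uniq[of s a x x0] x0 True unfolding D_def by argo
            thus False using \<open>x \<noteq> x0\<close> by simp
          qed
          thus ?thesis using g0[OF True] by simp
        next
          case False thus ?thesis using pmf_nonneg[of D x] by simp
        qed
      qed
      also have "\<dots> \<le> pmf D x0 * 1" using g_le[of x0] pmf_nonneg[of D x0] by (intro mult_left_mono)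
      also have "\<dots> \<le> cst A" using Dc[of x0] by simp
      finally have "(\<Sum>t\<in>{t. rank t = rank s}. word_mat A (a # u) s t) \<le> cst A" unfolding sumD .
      thus ?thesis by blast
    next
      case False
      have "(\<Sum>x\<in>UNIV. pmf D x * g x) = 0"
      proof (rule sum.neutral, rule ballI)
        fix x
        show "pmf D x * g x = 0"
        proof (cases "pmf D x > 0")
          case True
          then have "rank x \<noteq> rank s" using False by auto
          thus ?thesis using g0[OF True] by simp
        next
          case False thus ?thesis using pmf_nonneg[of D x] by simp
        qed
      qed
      hence "(\<Sum>t\<in>{t. rank t = rank s}. word_mat A (a # u) s t) \<le> cst A" unfolding sumD using cst_ge0[of A] by simp
      thus ?thesis by blast
    qed
  qed
qed

lemma two_le_row:
  assumes "t \<noteq> q"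
  shows "word_mat (A::('q::finite,'a) prob_automaton) u r t + word_mat A u r q \<le> 1"
proof -
  have "word_mat A u r t + word_mat A u r q = (\<Sum>y\<in>{t,q}. word_mat A u r y)" using assms by simp
  also have "\<dots> \<le> (\<Sum>y\<in>UNIV. word_mat A u r y)" by (intro sum_mono2) (auto simp: wm_nonneg)
  finally show ?thesis by (simp add: wm_rowsum)
qed

theorem proposition5p5:
  fixes A :: "('q::finite, 'a::finite) prob_automaton"
  assumes "hierarchical A"
  shows "leaktight A"
proof -
  obtain rank :: "'q \<Rightarrow> nat" where
    mono0: "\<forall>a s t. pmf (pa_trans A s a) t > 0 \<longrightarrow> rank s \<le> rank t" and
    uniq0: "\<forall>a s t t'. pmf (pa_trans A s a) t > 0 \<and> pmf (pa_trans A s a) t' > 0 \<and>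
        rank s = rank t \<and> rank s = rank t' \<longrightarrow> t = t'"
    using assms unfolding hierarchical_def by blast
  have mono: "\<And>a s t. pmf (pa_trans A s a) t > 0 \<Longrightarrow> rank s \<le> rank t" using mono0 by blast
  have uniq: "\<And>a s t t'. pmf (pa_trans A s a) t > 0 \<Longrightarrow> pmf (pa_trans A s a) t' > 0 \<Longrightarrow>
        rank s = rank t \<Longrightarrow> rank s = rank t' \<Longrightarrow> t = t'" using uniq0 by blast
  have wr: "\<And>u s t. word_mat A u s t > 0 \<Longrightarrow> rank s \<le> rank t"
    by (rule wm_rank[where A=A and rank=rank]) (use mono in blast)+
  have wi: "\<And>u s. (\<exists>t. word_mat A u s t = 1) \<or> (\<Sum>t\<in>{t. rank t = rank s}. word_mat A u s t) \<le> cst A"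
    by (rule wm_inv[where A=A and rank=rank]) (use mono uniq in blast)+
  show ?thesis unfolding leaktight_def
  proof
    assume "\<exists>u. is_leak A u"
    then obtain u M r q where
      conv: "\<And>s t. (\<lambda>n. word_mat A (u n) s t) \<longlonglongrightarrow> M s t" and
      rec: "recurrent M r" and
      lim0: "(\<lambda>n. word_mat A (u n) r q) \<longlonglongrightarrow> 0" and
      pos: "\<And>n. word_mat A (u n) r q > 0"
      unfolding is_leak_def by blast
    have Mnn: "M s t \<ge> 0" for s t
      by (rule LIMSEQ_le_const[OF conv[of s t]]) (auto simp: wm_nonneg)
    have Medge: "rank x \<le> rank y" if "M x y > 0" for x y
    proof -
      have "eventually (\<lambda>n. word_mat A (u n) x y > 0) sequentially"
        using order_tendstoD(1)[OF conv[of x y] that] .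
      then obtain N where "\<And>n. n \<ge> N \<Longrightarrow> word_mat A (u n) x y > 0"
        unfolding eventually_sequentially by blast
      hence "word_mat A (u N) x y > 0" by simp
      thus ?thesis by (rule wr)
    qed
    have Mpath: "rank x \<le> rank y" if "(x, y) \<in> {(x, y). M x y > 0}\<^sup>*" for x y
      using that
    proof (induction rule: rtrancl_induct)
      case base then show ?case by simp
    next
      case (step y z) then show ?case using Medge[of y z] by simp
    qed
    let ?R = "{t. rank t = rank r}"
    have Msupp: "rank t = rank r" if "M r t > 0" for t
    proof -
      have e: "(r, t) \<in> {(x, y). M x y > 0}\<^sup>*" using that by auto
      hence "(t, r) \<in> {(x, y). M x y > 0}\<^sup>*" using rec unfolding recurrent_def by blast
      thus ?thesis using Mpath[OF e] Mpath by (meson antisym)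
    qed
    have rowM: "(\<Sum>t\<in>UNIV. M r t) = 1"
    proof -
      have "(\<lambda>n. \<Sum>t\<in>UNIV. word_mat A (u n) r t) \<longlonglongrightarrow> (\<Sum>t\<in>UNIV. M r t)"
        by (intro tendsto_sum conv)
      moreover have "(\<lambda>n. \<Sum>t\<in>UNIV. word_mat A (u n) r t) = (\<lambda>n. 1)" by (simp add: wm_rowsum)
      ultimately show ?thesis using LIMSEQ_unique tendsto_const by metis
    qed
    have rowR: "(\<Sum>t\<in>?R. M r t) = 1"
    proof -
      have "(\<Sum>t\<in>UNIV. M r t) = (\<Sum>t\<in>?R. M r t)"
      proof (rule sum.mono_neutral_right)
        show "\<forall>i\<in>UNIV - ?R. M r i = 0"
        proof
          fix i assume "i \<in> UNIV - ?R"
          hence "\<not> M r i > 0" using Msupp by auto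
          thus "M r i = 0" using Mnn[of r i] by simp
        qed
      qed auto
      thus ?thesis using rowM by simp
    qed
    have "(\<lambda>n. \<Sum>t\<in>?R. word_mat A (u n) r t) \<longlonglongrightarrow> (\<Sum>t\<in>?R. M r t)"
      by (intro tendsto_sum conv)
    hence "(\<lambda>n. \<Sum>t\<in>?R. word_mat A (u n) r t) \<longlonglongrightarrow> 1" using rowR by simp
    hence ev1: "eventually (\<lambda>n. (\<Sum>t\<in>?R. word_mat A (u n) r t) > cst A) sequentially"
      using cst_lt1[of A] by (rule order_tendstoD(1))
    have ev2: "eventually (\<lambda>n. word_mat A (u n) r q < 1) sequentially"
      using lim0 by (rule order_tendstoD(2)) simp
    obtain N where N: "\<And>n. n \<ge> N \<Longrightarrow> (\<Sum>t\<in>?R. word_mat A (u n) r t) > cst A \<and> word_mat A (u n) r q < 1"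
      using eventually_conj[OF ev1 ev2] unfolding eventually_sequentially by blast
    have c1: "(\<Sum>t\<in>?R. word_mat A (u N) r t) > cst A" and c2: "word_mat A (u N) r q < 1"
      using N[of N] by auto
    from wi[of "u N" r] c1
    obtain t where t: "word_mat A (u N) r t = 1" by auto
    with c2 have "t \<noteq> q" by auto
    from two_le_row[OF this, of A "u N" r] t pos[of N] show False by simp
  qed
qed

end
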